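(* For every integer $k \geq 1$, let $\mathcal{c}(k)$ denote the greatest common divisor of all the sums $\sum_{i=1}^{k} c_{n+i}$, $n \geq 0$. Then $$\mathcal{c}(k) = \begin{cases} 4P_{k}, & \text{if } k \text{ is even};\\ Q_{k}, & \text{if } k \text{ is odd}.\end{cases}$$
   Context: The Pell sequence $(P_n)_{n\ge0}$ is defined by $P_0=0$, $P_1=1$, $P_n = 2P_{n-1}+P_{n-2}$. The associated Pell sequence $(Q_n)_{n\ge0}$ is defined by $Q_0=1$, $Q_1=1$, $Q_n=2Q_{n-1}+Q_{n-2}$. The Lucas-cobalancing sequence $(c_n)_{n\ge0}$ is defined by $c_0=-1$, $c_1=1$, $c_n=6c_{n-1}-c_{n-2}$. *)

theory Defs
  imports Main
begin

fun pell :: "nat \<Rightarrow> int" where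
  "pell 0 = 0"
| "pell (Suc 0) = 1"
| "pell (Suc (Suc n)) = 2 * pell (Suc n) + pell n"

fun assoc_pell :: "nat \<Rightarrow> int" where
  "assoc_pell 0 = 1"
| "assoc_pell (Suc 0) = 1"
| "assoc_pell (Suc (Suc n)) = 2 * assoc_pell (Suc n) + assoc_pell n"

fun lucas_cobal :: "nat \<Rightarrow> int" where
  "lucas_cobal 0 = -1"
| "lucas_cobal (Suc 0) = 1"
| "lucas_cobal (Suc (Suc n)) = 6 * lucas_cobal (Suc n) - lucas_cobal n"

definition cgcd :: "nat \<Rightarrow> int" where
  "cgcd k = Gcd {(\<Sum>i=1..k. lucas_cobal (n + i)) | n. True}"

end

theory Submission
  imports Defs
begin


lemma PQ_nonneg: "pell n \<ge> 0" "assoc_pell n \<ge> 0"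
proof -
  have "pell n \<ge> 0 \<and> pell (Suc n) \<ge> 0" by (induction n) auto
  then show "pell n \<ge> 0" by simp
  have "assoc_pell n \<ge> 0 \<and> assoc_pell (Suc n) \<ge> 0" by (induction n) auto
  then show "assoc_pell n \<ge> 0" by simp
qed

lemma Q_odd: "odd (assoc_pell n)"
proof -
  have "odd (assoc_pell n) \<and> odd (assoc_pell (Suc n))" by (induction n) auto
  then show ?thesis by simp
qed

lemma P_even: "even (pell n) \<longleftrightarrow> even n"
proof -
  have "(even (pell n) \<longleftrightarrow> even n) \<and> (even (pell (Suc n)) \<longleftrightarrow> even (Suc n))" by (induction n) auto
  then show ?thesis by simp
qed

lemma step1: "pell (Suc a) = pell a + assoc_pell a \<and> assoc_pell (Suc a) = assoc_pell a + 2 * pell a"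
proof (induction a rule: pell.induct)
  case (3 n)
  then show ?case by simp
qed auto

lemma addf: "pell (a+b) = pell a * assoc_pell b + assoc_pell a * pell b \<and>
  assoc_pell (a+b) = assoc_pell a * assoc_pell b + 2 * pell a * pell b"
proof -
  have "(pell (a+b) = pell a * assoc_pell b + assoc_pell a * pell b \<and>
  assoc_pell (a+b) = assoc_pell a * assoc_pell b + 2 * pell a * pell b) \<and>
  (pell (a+Suc b) = pell a * assoc_pell (Suc b) + assoc_pell a * pell (Suc b) \<and>
  assoc_pell (a+Suc b) = assoc_pell a * assoc_pell (Suc b) + 2 * pell a * pell (Suc b))"
  proof (induction b)
    case 0
    then show ?case using step1[of a] by simp
  next
    case (Suc b)
    then show ?case by (simp add: algebra_simps)
  qed
  then show ?thesis by simp
qed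


lemma cassini: "assoc_pell n ^ 2 - 2 * pell n ^ 2 = (-1) ^ n"
proof (induction n)
  case 0
  then show ?case by simp
next
  case (Suc n)
  have "assoc_pell (Suc n) ^ 2 - 2 * pell (Suc n) ^ 2 = - (assoc_pell n ^ 2 - 2 * pell n ^ 2)"
    using step1[of n] by (simp add: power2_eq_square algebra_simps)
  then show ?case using Suc by simp
qed

lemma Q4: "assoc_pell (Suc (Suc (Suc (Suc m)))) = 6 * assoc_pell (Suc (Suc m)) - assoc_pell m"
  by simp

lemma cQ: "lucas_cobal (Suc n) = assoc_pell (2*n+1)"
proof -
  have "lucas_cobal (Suc n) = assoc_pell (2*n+1) \<and> lucas_cobal (Suc (Suc n)) = assoc_pell (2*n+3)"
  proof (induction n)
    case 0
    then show ?case by (simp add: numeral_eq_Suc)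
  next
    case (Suc n)
    have "assoc_pell (2 * Suc n + 3) = 6 * assoc_pell (2*n+3) - assoc_pell (2*n+1)"
      using Q4[of "2*n+1"] by (simp add: numeral_eq_Suc)
    with Suc show ?case by (simp add: numeral_eq_Suc)
  qed
  then show ?thesis by simp
qed

definition S :: "nat \<Rightarrow> nat \<Rightarrow> int" where
  "S n k = (\<Sum>i=1..k. lucas_cobal (n + i))"

lemma S2: "2 * S n k = assoc_pell (2*n+2*k) - assoc_pell (2*n)"
proof (induction k)
  case 0
  then show ?case by (simp add: S_def)
next
  case (Suc k)
  have "S n (Suc k) = S n k + lucas_cobal (Suc (n + k))"
    by (simp add: S_def)
  also have "lucas_cobal (Suc (n + k)) = assoc_pell (2*n+2*k+1)" using cQ[of "n+k"] by simp
  finally have e: "S n (Suc k) = S n k + assoc_pell (2*n+2*k+1)" .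
  have "assoc_pell (2*n+2*Suc k) = 2 * assoc_pell (2*n+2*k+1) + assoc_pell (2*n+2*k)"
    by (simp add: numeral_eq_Suc)
  then show ?case using e Suc by simp
qed


lemma Sform: "2 * S n k = (if even k then 4 * pell k * pell (2*n+k) else 2 * assoc_pell k * assoc_pell (2*n+k))"
proof -
  define a where "a = 2*n"
  define X where "X = assoc_pell a"
  define Y where "Y = pell a"
  define q where "q = assoc_pell k"
  define p where "p = pell k"
  have e1: "assoc_pell (a + k + k) = assoc_pell (a+k) * q + 2 * pell (a+k) * p"
    unfolding p_def q_def by (rule conjunct2[OF addf])
  have e2: "pell (a+k) = Y * q + X * p"
    unfolding p_def q_def X_def Y_def by (rule conjunct1[OF addf])
  have e3: "assoc_pell (a+k) = X * q + 2 * Y * p"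
    unfolding p_def q_def X_def Y_def by (rule conjunct2[OF addf])
  have c: "q ^ 2 - 2 * p ^ 2 = (-1) ^ k" unfolding p_def q_def by (rule cassini)
  have ak: "2*n+2*k = a + k + k" unfolding a_def by simp
  have s: "2 * S n k = assoc_pell (a + k + k) - X"
    using S2[of n k] unfolding ak X_def a_def .
  have E: "assoc_pell (a + k + k) - X = X * (q^2 - 2*p^2 - 1) + 4 * p * (Y * q + X * p)"
    unfolding e1 e2 e3 by (simp add: power2_eq_square algebra_simps)
  have O: "assoc_pell (a + k + k) - X = X * (q^2 + 2*p^2 - 1) + 4 * p * Y * q"
    unfolding e1 e2 e3 by (simp add: power2_eq_square algebra_simps)
  show ?thesis
  proof (cases "even k")
    case True
    then have "q^2 - 2*p^2 - 1 = 0" using c by simp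
    then show ?thesis using True s E e2 unfolding a_def p_def by simp
  next
    case False
    then have "q^2 + 2*p^2 - 1 = 2 * q^2" using c by simp
    then have "assoc_pell (a + k + k) - X = 2 * q * (X * q + 2 * Y * p)"
      using O by (simp add: power2_eq_square algebra_simps)
    then show ?thesis using False s e3 unfolding a_def q_def by simp
  qed
qed

lemma copP: "gcd (pell n) (pell (Suc n)) = 1"
proof (induction n)
  case 0 then show ?case by simp
next
  case (Suc n)
  have "gcd (pell (Suc n)) (pell (Suc (Suc n))) = gcd (pell (Suc n)) (2 * pell (Suc n) + pell n)"
    by simp
  also have "... = gcd (pell (Suc n)) (pell n)" by (rule gcd_add_mult)
  finally show ?case using Suc by (simp add: gcd.commute)
qed
lemma copQ: "gcd (assoc_pell n) (assoc_pell (Suc n)) = 1"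
proof (induction n)
  case 0 then show ?case by simp
next
  case (Suc n)
  have "gcd (assoc_pell (Suc n)) (assoc_pell (Suc (Suc n))) = gcd (assoc_pell (Suc n)) (2 * assoc_pell (Suc n) + assoc_pell n)"
    by simp
  also have "... = gcd (assoc_pell (Suc n)) (assoc_pell n)" by (rule gcd_add_mult)
  finally show ?case using Suc by (simp add: gcd.commute)
qed
lemma gP: "even k \<Longrightarrow> gcd (pell k) (pell (k+2)) = 2"
proof -
  assume ev: "even k"
  have "gcd (pell k) (pell (k+2)) = gcd (pell k) (pell k + 2 * pell (Suc k))" by (simp add: numeral_eq_Suc add.commute)
  also have "... = gcd (pell k) (2 * pell (Suc k))" by (rule gcd_add2)
  also have "... = gcd (pell k) 2" using copP[of k] by (simp add: coprime_iff_gcd_eq_1 gcd_mult_right_right_cancel)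
  also have "... = 2" using ev P_even[of k] by simp
  finally show ?thesis .
qed
lemma gQ: "gcd (assoc_pell k) (assoc_pell (k+2)) = 1"
proof -
  have "gcd (assoc_pell k) (assoc_pell (k+2)) = gcd (assoc_pell k) (assoc_pell k + 2 * assoc_pell (Suc k))" by (simp add: numeral_eq_Suc add.commute)
  also have "... = gcd (assoc_pell k) (2 * assoc_pell (Suc k))" by (rule gcd_add2)
  also have "... = gcd (assoc_pell k) 2" using copQ[of k] by (simp add: coprime_iff_gcd_eq_1 gcd_mult_right_right_cancel)
  also have "... = 1" using Q_odd[of k] by simp
  finally show ?thesis .
qed

theorem theorem19:
  fixes k :: nat
  assumes "k \<ge> 1"
  shows "cgcd k = (if even k then 4 * pell k else assoc_pell k)"
proof -
  define d where "d = (if even k then 4 * pell k else assoc_pell k)"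
  define A where "A = {(\<Sum>i=1..k. lucas_cobal (n + i)) | n. True}"
  have SA: "S n k \<in> A" for n unfolding A_def S_def by blast
  have dS: "d dvd S n k" for n
  proof (cases "even k")
    case True
    have "even (pell (2*n+k))" using True P_even by simp
    then obtain m where m: "pell (2*n+k) = 2 * m" by blast
    have "2 * S n k = 2 * (4 * pell k * m)" using Sform[of n k] True m by simp
    then have "S n k = 4 * pell k * m" by simp
    then show ?thesis unfolding d_def using True by simp
  next
    case False
    have "2 * S n k = 2 * (assoc_pell k * assoc_pell (2*n+k))" using Sform[of n k] False by simp
    then have "S n k = assoc_pell k * assoc_pell (2*n+k)" by simp
    then show ?thesis unfolding d_def using False by simp
  qed
  have dA: "d dvd x" if "x \<in> A" for x
    using that dS unfolding A_def S_def by auto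
  have g01: "gcd (S 0 k) (S 1 k) = d"
  proof (cases "even k")
    case True
    have "S 0 k = (2 * pell k) * pell k" "S 1 k = (2 * pell k) * pell (k+2)"
      using Sform[of 0 k] Sform[of 1 k] True by (simp_all add: add.commute)
    then have "gcd (S 0 k) (S 1 k) = normalize (2 * pell k * gcd (pell k) (pell (k+2)))"
      by (simp only: gcd_mult_left)
    also have "... = 4 * pell k" using gP[OF True] PQ_nonneg(1)[of k] by simp
    finally show ?thesis unfolding d_def using True by simp
  next
    case False
    have "S 0 k = assoc_pell k * assoc_pell k" "S 1 k = assoc_pell k * assoc_pell (k+2)"
      using Sform[of 0 k] Sform[of 1 k] False by (simp_all add: add.commute)
    then have "gcd (S 0 k) (S 1 k) = normalize (assoc_pell k * gcd (assoc_pell k) (assoc_pell (k+2)))"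
      by (simp only: gcd_mult_left)
    also have "... = assoc_pell k" using gQ[of k] PQ_nonneg(2)[of k] by simp
    finally show ?thesis unfolding d_def using False by simp
  qed
  have "Gcd A dvd d" unfolding g01[symmetric] using SA by (simp add: Gcd_dvd)
  moreover have "d dvd Gcd A" using dA by (simp add: Gcd_greatest)
  moreover have "0 \<le> Gcd A" by simp
  moreover have "0 \<le> d" unfolding d_def using PQ_nonneg by simp
  ultimately have "Gcd A = d" by (simp add: zdvd_antisym_nonneg)
  then show ?thesis unfolding cgcd_def A_def d_def .
qed
end
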